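(* There is a constant $C>0$ such that for every proper binary tree $\mathcal T$ with $n\ge2$ leaves (labeled as below), the matrix $\mathbf M_{\mathcal T}\in\mathrm{GL}(n,2)$ is a product of at most $C\log^2 n$ parallel row-elimination matrices. That is, the CNOT circuit $\mathbf M_{\mathcal T}$ can be parallelized to depth $O(\log^2 n)$ without ancillae.
   Context: $\mathsf R(i,j)=\mathbf I+\mathbf 1_{j,i}$ over $\mathbb F_2$, where $\mathbf 1_{j,i}$ is the matrix with a single $1$ in entry $(j,i)$. Left-multiplying by $\mathsf R(i,j)$ adds row $i$ to row $j$, i.e., it is a CNOT gate with control $i$ and target $j$. A parallel row-elimination matrix is $\mathbf I$ or $\mathbf I+\sum_{k=1}^t\mathbf 1_{j_k,i_k}$, where the $2t$ indices $i_k,j_k$ are pairwise distinct. CNOT tree: $\mathcal T$ is a proper binary tree (each internal node has exactly two children, a left child and a right child). Its $n$ leaves carry distinct labels from $[n]$, and each internal node carries a label in $\{L,R\}$. Each node $v$ receives a qubit index $i(v)$, and each internal node $v$ a matrix $\mathbf M_v$, as follows. Write $c_L,c_R$ for the left and right children of $v$. - If $v$ is a leaf, $i(v)$ is its label. - If $v$ is internal with label $L$, then $i(v)=i(c_L)$ and $\mathbf M_v=\mathsf R(i(c_R),i(c_L))$. - If $v$ is internal with label $R$, then $i(v)=i(c_R)$ and $\mathbf M_v=\mathsf R(i(c_L),i(c_R))$. If $v_1,\dots,v_{n-1}$ are the internal nodes listed in postorder, then $\mathbf M_{\mathcal T}=\mathbf M_{v_{n-1}}\cdots\mathbf M_{v_2}\mathbf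 M_{v_1}$. *)

theory Defs
  imports "Jordan_Normal_Form.Matrix" "HOL-Library.Z2" Complex_Main
begin

text \<open>Matrices over F_2 are n x n matrices of type bit mat (HOL-Library.Z2).
  Qubit indices are taken from [n] = {1..n}; qubit i corresponds to row/column i-1.\<close>

definition unit_entry :: "nat \<Rightarrow> nat \<Rightarrow> nat \<Rightarrow> bit mat" where
  "unit_entry n j i = mat n n (\<lambda>(r, c). if r = j - 1 \<and> c = i - 1 then 1 else 0)"

text \<open>R(i,j) = I + 1_{j,i}: CNOT with control i and target j.\<close>
definition rowelim :: "nat \<Rightarrow> nat \<Rightarrow> nat \<Rightarrow> bit mat" where
  "rowelim n i j = 1\<^sub>m n + unit_entry n j i"

definition par_elim :: "nat \<Rightarrow> bit mat \<Rightarrow> bool" where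
  "par_elim n M \<longleftrightarrow> (\<exists>ps :: (nat \<times> nat) list.
     distinct (map fst ps @ map snd ps) \<and>
     (\<forall>(i, j) \<in> set ps. i \<in> {1..n} \<and> j \<in> {1..n}) \<and>
     M = foldr (\<lambda>(i, j) A. unit_entry n j i + A) ps (1\<^sub>m n))"

datatype lr = L | R

datatype ctree = Leaf nat | Node lr ctree ctree

fun leaves :: "ctree \<Rightarrow> nat list" where
  "leaves (Leaf a) = [a]"
| "leaves (Node _ l r) = leaves l @ leaves r"

fun qidx :: "ctree \<Rightarrow> nat" where
  "qidx (Leaf a) = a"
| "qidx (Node L l r) = qidx l"
| "qidx (Node R l r) = qidx r"

fun node_mat :: "nat \<Rightarrow> lr \<Rightarrow> ctree \<Rightarrow> ctree \<Rightarrow> bit mat" where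
  "node_mat n L l r = rowelim n (qidx r) (qidx l)"
| "node_mat n R l r = rowelim n (qidx l) (qidx r)"

text \<open>M_T = M_{v_{n-1}} ... M_{v_1} with internal nodes in postorder
  (left subtree, right subtree, node).\<close>
fun tree_mat :: "nat \<Rightarrow> ctree \<Rightarrow> bit mat" where
  "tree_mat n (Leaf a) = 1\<^sub>m n"
| "tree_mat n (Node b l r) = node_mat n b l r * (tree_mat n r * tree_mat n l)"

definition cnot_tree :: "nat \<Rightarrow> ctree \<Rightarrow> bool" where
  "cnot_tree n T \<longleftrightarrow> length (leaves T) = n \<and> distinct (leaves T) \<and> set (leaves T) \<subseteq> {1..n}"

end

theory Submission
  imports Defs
begin

declare add_bit_eq_xor[simp del] mult_bit_eq_and[simp del]

fun gate_app :: "nat \<times> nat \<Rightarrow> (nat \<Rightarrow> bit) \<Rightarrow> nat \<Rightarrow> bit" where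
  "gate_app (i, j) x = x(j := x j + x i)"

fun run :: "(nat \<times> nat) list \<Rightarrow> (nat \<Rightarrow> bit) \<Rightarrow> nat \<Rightarrow> bit" where
  "run [] x = x"
| "run (a # g) x = gate_app a (run g x)"

definition idx :: "(nat \<times> nat) list \<Rightarrow> nat set" where
  "idx g = fst ` set g \<union> snd ` set g"

definition gm :: "nat \<Rightarrow> (nat \<times> nat) list \<Rightarrow> bit mat" where
  "gm n g = foldr (*) (map (\<lambda>(i, j). rowelim n i j) g) (1\<^sub>m n)"

definition tofun :: "nat \<Rightarrow> bit vec \<Rightarrow> nat \<Rightarrow> bit" where
  "tofun n v = (\<lambda>k. if 1 \<le> k \<and> k \<le> n then v $ (k - 1) else 0)"

lemma idx_Cons[simp]: "idx (a # g) = {fst a, snd a} \<union> idx g"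
  by (auto simp: idx_def)
lemma idx_Nil[simp]: "idx [] = {}"
  by (auto simp: idx_def)
lemma idx_append[simp]: "idx (g @ h) = idx g \<union> idx h"
  by (auto simp: idx_def)

lemma run_append[simp]: "run (g @ h) x = run g (run h x)"
  by (induction g) auto

lemma run_outside: "q \<notin> idx g \<Longrightarrow> run g x q = x q"
  by (induction g) (auto)

lemma unit_entry_carrier[simp]: "unit_entry n j i \<in> carrier_mat n n"
  by (simp add: unit_entry_def)

lemma rowelim_carrier[simp]: "rowelim n i j \<in> carrier_mat n n"
  by (simp add: rowelim_def)

lemma gm_carrier[simp]: "gm n g \<in> carrier_mat n n"
  by (induction g) (auto simp: gm_def intro!: mult_carrier_mat[of _ n n _ n])

lemma unit_entry_vec:
  assumes w: "w \<in> carrier_vec n" and i: "1 \<le> i" "i \<le> n"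
  shows "unit_entry n j i *\<^sub>v w = vec n (\<lambda>r. if r = j - 1 then w $ (i - 1) else 0)"
proof (rule eq_vecI)
  fix r assume r: "r < dim_vec (vec n (\<lambda>r. if r = j - 1 then w $ (i - 1) else 0))"
  hence rn: "r < n" by simp
  have row: "row (unit_entry n j i) r = (if r = j - 1 then unit_vec n (i - 1) else 0\<^sub>v n)"
    by (rule eq_vecI) (use rn i in \<open>auto simp: unit_entry_def\<close>)
  show "(unit_entry n j i *\<^sub>v w) $ r = vec n (\<lambda>r. if r = j - 1 then w $ (i - 1) else 0) $ r"
  proof -
    have "(unit_entry n j i *\<^sub>v w) $ r = row (unit_entry n j i) r \<bullet> w"
      using rn by (simp add: unit_entry_def)
    also have "\<dots> = (if r = j - 1 then w $ (i - 1) else 0)"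
      using w i by (simp add: row)
    finally show ?thesis using rn by simp
  qed
qed (simp add: unit_entry_def)

lemma rowelim_vec:
  assumes w: "w \<in> carrier_vec n" and i: "1 \<le> i" "i \<le> n"
  shows "rowelim n i j *\<^sub>v w = vec n (\<lambda>r. w $ r + (if r = j - 1 then w $ (i - 1) else 0))"
proof -
  have "rowelim n i j *\<^sub>v w = 1\<^sub>m n *\<^sub>v w + unit_entry n j i *\<^sub>v w"
    unfolding rowelim_def using w by (simp add: add_mult_distrib_mat_vec[of _ n n])
  also have "\<dots> = vec n (\<lambda>r. w $ r + (if r = j - 1 then w $ (i - 1) else 0))"
    using w i by (simp add: unit_entry_vec) (rule eq_vecI, auto)
  finally show ?thesis .
qed

lemma tofun_vec:
  assumes "idx g \<subseteq> {1..n}" "\<And>k. \<not> (1 \<le> k \<and> k \<le> n) \<Longrightarrow> f k = 0"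
  shows "tofun n (vec n (\<lambda>r. run g f (Suc r))) = run g f"
proof
  fix k show "tofun n (vec n (\<lambda>r. run g f (Suc r))) k = run g f k"
  proof (cases "1 \<le> k \<and> k \<le> n")
    case True thus ?thesis by (auto simp: tofun_def)
  next
    case False
    hence "k \<notin> idx g" using assms(1) by auto
    thus ?thesis using False assms(2) by (auto simp: tofun_def run_outside)
  qed
qed

lemma tofun_zero: "\<not> (1 \<le> k \<and> k \<le> n) \<Longrightarrow> tofun n v k = 0"
  by (auto simp: tofun_def)

lemma gm_vec:
  assumes "idx g \<subseteq> {1..n}" "v \<in> carrier_vec n"
  shows "gm n g *\<^sub>v v = vec n (\<lambda>r. run g (tofun n v) (Suc r))"
  using assms(1)
proof (induction g)
  case Nil
  show ?case using assms(2) by (auto simp: gm_def tofun_def intro!: eq_vecI)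
next
  case (Cons a g)
  obtain i j where a: "a = (i, j)" by force
  have ij: "1 \<le> i" "i \<le> n" "1 \<le> j" "j \<le> n" using Cons.prems a by auto
  have IH: "gm n g *\<^sub>v v = vec n (\<lambda>r. run g (tofun n v) (Suc r))"
    using Cons by auto
  have "gm n (a # g) *\<^sub>v v = rowelim n i j *\<^sub>v (gm n g *\<^sub>v v)"
    using assms(2) by (simp add: a gm_def[of n "_ # _"] gm_def[of n g, symmetric]
        assoc_mult_mat_vec[of _ n n _ n])
  also have "\<dots> = vec n (\<lambda>r. run (a # g) (tofun n v) (Suc r))"
    unfolding IH using ij by (subst rowelim_vec) (auto simp: a intro!: eq_vecI)
  finally show ?case .
qed

lemma mat_eq_by_vec:
  fixes A B :: "'a::semiring_1 mat"
  assumes "A \<in> carrier_mat n n" "B \<in> carrier_mat n n"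
    "\<And>v. v \<in> carrier_vec n \<Longrightarrow> A *\<^sub>v v = B *\<^sub>v v"
  shows "A = B"
proof (rule eq_matI)
  fix i j assume ij: "i < dim_row B" "j < dim_col B"
  hence ij': "i < n" "j < n" using assms by auto
  have "A $$ (i, j) = (A *\<^sub>v unit_vec n j) $ i"
    using ij' assms(1) by simp
  also have "\<dots> = (B *\<^sub>v unit_vec n j) $ i" using assms(3) by simp
  also have "\<dots> = B $$ (i, j)" using ij' assms(2) by simp
  finally show "A $$ (i, j) = B $$ (i, j)" .
qed (use assms in auto)

lemma gm_eq:
  assumes "idx g \<subseteq> {1..n}" "idx h \<subseteq> {1..n}" "\<And>x. run g x = run h x"
  shows "gm n g = gm n h"
  by (rule mat_eq_by_vec[of _ n]) (use assms in \<open>auto simp: gm_vec\<close>)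

lemma gm_append: "gm n (g @ h) = gm n g * gm n h"
proof (induction g)
  case Nil have "gm n [] = 1\<^sub>m n" by (simp add: gm_def)
  thus ?case by (simp add: left_mult_one_mat[OF gm_carrier])
next
  case (Cons a g)
  have "gm n ((a # g) @ h) = (case a of (i, j) \<Rightarrow> rowelim n i j) * gm n (g @ h)"
    by (simp add: gm_def)
  also have "\<dots> = (case a of (i, j) \<Rightarrow> rowelim n i j) * (gm n g * gm n h)" using Cons by simp
  also have "\<dots> = ((case a of (i, j) \<Rightarrow> rowelim n i j) * gm n g) * gm n h"
    by (rule assoc_mult_mat[of _ n n _ n _ n, symmetric]) (auto split: prod.splits)
  also have "\<dots> = gm n (a # g) * gm n h" by (simp add: gm_def)
  finally show ?case .
qed

lemma gm_concat: "gm n (concat Ls) = foldr (*) (map (gm n) Ls) (1\<^sub>m n)"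
  by (induction Ls) (auto simp: gm_append, simp add: gm_def)

definition parm :: "nat \<Rightarrow> (nat \<times> nat) list \<Rightarrow> bit mat" where
  "parm n ps = foldr (\<lambda>(i, j) A. unit_entry n j i + A) ps (1\<^sub>m n)"

lemma parm_carrier[simp]: "parm n ps \<in> carrier_mat n n"
  by (induction ps) (auto simp: parm_def)

lemma parm_vec:
  assumes "distinct (map fst ps @ map snd ps)" "idx ps \<subseteq> {1..n}" "v \<in> carrier_vec n"
  shows "parm n ps *\<^sub>v v = vec n (\<lambda>r. run ps (tofun n v) (Suc r))"
  using assms(1,2)
proof (induction ps)
  case Nil
  show ?case using assms(3) by (auto simp: parm_def tofun_def intro!: eq_vecI)
next
  case (Cons a ps)
  obtain i j where a: "a = (i, j)" by force
  have ij: "1 \<le> i" "i \<le> n" "1 \<le> j" "j \<le> n" using Cons.prems a by auto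
  have IH: "parm n ps *\<^sub>v v = vec n (\<lambda>r. run ps (tofun n v) (Suc r))"
    using Cons by auto
  have iout: "i \<notin> idx ps" using Cons.prems(1) a by (auto simp: idx_def)
  have "parm n (a # ps) *\<^sub>v v = unit_entry n j i *\<^sub>v v + parm n ps *\<^sub>v v"
  proof -
    have "parm n (a # ps) = unit_entry n j i + parm n ps" by (simp add: a parm_def)
    thus ?thesis using add_mult_distrib_mat_vec[OF unit_entry_carrier parm_carrier assms(3)] by simp
  qed
  also have "\<dots> = vec n (\<lambda>r. run (a # ps) (tofun n v) (Suc r))"
    unfolding IH using ij assms(3) iout
    by (subst unit_entry_vec) (auto simp: a run_outside tofun_def add.commute intro!: eq_vecI)
  finally show ?case .
qed

lemma parm_gm:
  assumes "distinct (map fst ps @ map snd ps)" "idx ps \<subseteq> {1..n}"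
  shows "parm n ps = gm n ps"
  by (rule mat_eq_by_vec[of _ n]) (use assms in \<open>auto simp: gm_vec parm_vec\<close>)

lemma par_elim_gm:
  assumes "distinct (map fst ps @ map snd ps)" "idx ps \<subseteq> {1..n}"
  shows "par_elim n (gm n ps)"
  unfolding par_elim_def
  by (rule exI[of _ ps]) (use assms in \<open>auto simp: parm_gm[symmetric] parm_def idx_def\<close>)

section \<open>Trees as gate lists\<close>

lemma bit_add_self[simp]: "(y::bit) + y = 0"
  by (metis bit_2_eq_0 mult_2 mult_zero_left)

fun ngate :: "lr \<Rightarrow> ctree \<Rightarrow> ctree \<Rightarrow> nat \<times> nat" where
  "ngate L l r = (qidx r, qidx l)"
| "ngate R l r = (qidx l, qidx r)"

fun tg :: "ctree \<Rightarrow> (nat \<times> nat) list" where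
  "tg (Leaf a) = []"
| "tg (Node b l r) = ngate b l r # tg r @ tg l"

lemma gm_Cons: "gm n ((i, j) # g) = rowelim n i j * gm n g"
  by (simp add: gm_def)

lemma tree_mat_gm: "tree_mat n T = gm n (tg T)"
proof (induction T)
  case (Leaf a) thus ?case by (simp add: gm_def)
next
  case (Node b l r)
  thus ?case by (cases b) (simp_all add: gm_Cons gm_append)
qed

lemma qidx_in: "qidx T \<in> set (leaves T)"
proof (induction T)
  case (Node b l r) thus ?case by (cases b) auto
qed auto

lemma idx_tg: "idx (tg T) \<subseteq> set (leaves T)"
proof (induction T)
  case (Node b l r) thus ?case using qidx_in[of l] qidx_in[of r] by (cases b) auto
qed auto

lemma nl_pos: "0 < length (leaves T)"
  by (induction T) auto

lemma run_upd: "q \<notin> idx g \<Longrightarrow> run g (x(q := v)) = (run g x)(q := v)"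
proof (induction g)
  case (Cons a g)
  obtain i j where a: "a = (i, j)" by force
  show ?case using Cons a by (auto simp: fun_eq_iff)
qed auto

lemma gate_comm: assumes "{i, j} \<inter> idx h = {}"
  shows "gate_app (i, j) (run h x) = run h (gate_app (i, j) x)"
proof -
  have ij: "i \<notin> idx h" "j \<notin> idx h" using assms by auto
  have "run h (gate_app (i, j) x) = (run h x)(j := x j + x i)"
    unfolding gate_app.simps using ij(2) by (rule run_upd)
  moreover have "gate_app (i, j) (run h x) = (run h x)(j := x j + x i)"
    unfolding gate_app.simps using ij by (simp add: run_outside)
  ultimately show ?thesis by simp
qed

lemma run_comm: "idx g \<inter> idx h = {} \<Longrightarrow> run g (run h x) = run h (run g x)"
proof (induction g arbitrary: x)
  case (Cons a g)
  obtain i j where a: "a = (i, j)" by force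
  have "run (a # g) (run h x) = gate_app (i, j) (run h (run g x))" using Cons a by simp
  also have "\<dots> = run h (gate_app (i, j) (run g x))" using Cons.prems a by (intro gate_comm) auto
  finally show ?case using a by (simp only: run.simps)
qed auto

lemma run_agree: "(\<And>q. q \<in> S \<Longrightarrow> q \<notin> idx g) \<Longrightarrow> q \<in> S \<Longrightarrow> run g x q = x q"
  by (simp add: run_outside)

lemma root_sum:
  "distinct (leaves T) \<Longrightarrow> run (tg T) x (qidx T) = sum_list (map x (leaves T))"
proof (induction T arbitrary: x)
  case (Leaf a) thus ?case by simp
next
  case (Node b l r)
  have dl: "distinct (leaves l)" "distinct (leaves r)" "set (leaves l) \<inter> set (leaves r) = {}"
    using Node.prems by auto
  have ql: "qidx l \<notin> idx (tg r)" "qidx l \<notin> set (leaves r)" using qidx_in[of l] idx_tg[of r] dl by auto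
  have qr: "qidx r \<notin> idx (tg l)" "qidx r \<notin> set (leaves l)" using qidx_in[of r] idx_tg[of l] dl by auto
  have mr: "map (run (tg l) x) (leaves r) = map x (leaves r)"
    using idx_tg[of l] dl by (auto intro!: run_outside)
  have sr: "sum_list (map (run (tg l) x) (leaves r)) = sum_list (map x (leaves r))"
    using arg_cong[where f=sum_list, OF mr] .
  have ml: "map (run (tg r) x) (leaves l) = map x (leaves l)"
    using idx_tg[of r] dl by (auto intro!: run_outside)
  show ?case
  proof (cases b)
    case L
    have "run (tg (Node b l r)) x (qidx (Node b l r)) =
      run (tg r) (run (tg l) x) (qidx l) + run (tg r) (run (tg l) x) (qidx r)"
      using L by simp
    also have "\<dots> = sum_list (map x (leaves l)) + sum_list (map x (leaves r))"
      using Node.IH(1)[OF dl(1)] Node.IH(2)[OF dl(2)] ql sr by (simp add: run_outside)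
    finally show ?thesis by simp
  next
    case R
    have "run (tg (Node b l r)) x (qidx (Node b l r)) =
      run (tg r) (run (tg l) x) (qidx r) + run (tg r) (run (tg l) x) (qidx l)"
      using R by simp
    also have "\<dots> = sum_list (map x (leaves r)) + sum_list (map x (leaves l))"
      using Node.IH(1)[OF dl(1)] Node.IH(2)[OF dl(2)] ql sr by (simp add: run_outside)
    finally show ?thesis by (simp add: add.commute)
  qed
qed

lemma gate_past:
  assumes "distinct (leaves c)" "t \<notin> set (leaves c)"
  shows "gate_app (qidx c, t) (run (tg c) y) = run (tg c) (y(t := y t + sum_list (map y (leaves c))))"
proof -
  have t: "t \<notin> idx (tg c)" using assms idx_tg[of c] by auto
  have "run (tg c) (y(t := y t + sum_list (map y (leaves c)))) =
        (run (tg c) y)(t := y t + sum_list (map y (leaves c)))"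
    using t by (rule run_upd)
  moreover have "gate_app (qidx c, t) (run (tg c) y) = (run (tg c) y)(t := y t + sum_list (map y (leaves c)))"
    using t root_sum[OF assms(1)] by (simp add: run_outside)
  ultimately show ?thesis by simp
qed

fun hang :: "ctree \<Rightarrow> ctree list" where
  "hang (Leaf a) = []"
| "hang (Node L l r) = r # hang l"
| "hang (Node R l r) = l # hang r"

definition hleaves :: "ctree \<Rightarrow> nat list" where
  "hleaves U = concat (map leaves (hang U))"

lemma hleaves_simps[simp]:
  "hleaves (Leaf a) = []"
  "hleaves (Node L l r) = leaves r @ hleaves l"
  "hleaves (Node R l r) = leaves l @ hleaves r"
  by (simp_all add: hleaves_def)

lemma hang_mset: "mset (leaves U) = mset (qidx U # hleaves U)"
proof (induction U)
  case (Node b l r) thus ?case by (cases b) auto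
qed auto

lemma hang_set: "set (leaves U) = insert (qidx U) (set (hleaves U))"
  using arg_cong[where f=set_mset, OF hang_mset[of U]] by simp

lemma hang_distinct: "distinct (leaves U) \<Longrightarrow> distinct (qidx U # hleaves U)"
  using mset_eq_imp_distinct_iff[OF hang_mset[of U]] by simp

lemma hang_size_le: "H \<in> set (hang U) \<Longrightarrow> length (leaves H) \<le> length (leaves U)"
proof (induction U rule: hang.induct)
  case (2 l r) thus ?case by auto
next
  case (3 l r) thus ?case by auto
qed auto

lemma hang_node: "H \<in> set (hang (Node b l r)) \<Longrightarrow>
   length (leaves H) \<le> max (length (leaves l)) (length (leaves r))"
  by (cases b) (auto dest: hang_size_le)

lemma idx_concat: "idx (concat gs) = \<Union> (idx ` set gs)"
  by (induction gs) auto

lemma idx_forest: "idx (concat (map tg Hs)) \<subseteq> set (concat (map leaves Hs))"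
  using idx_tg by (fastforce simp: idx_concat)

lemma chain_split:
  "distinct (leaves U) \<Longrightarrow> run (tg U) x =
    run (concat (map tg (hang U))) (x(qidx U := x (qidx U) + sum_list (map x (hleaves U))))"
proof (induction U arbitrary: x)
  case (Leaf a) thus ?case by simp
next
  case (Node b l r)
  have dl: "distinct (leaves l)" "distinct (leaves r)" "set (leaves l) \<inter> set (leaves r) = {}"
    using Node.prems by auto
  show ?case
  proof (cases b)
    case L
    let ?q = "qidx l"
    let ?HL = "concat (map tg (hang l))"
    let ?x' = "x(?q := x ?q + sum_list (map x (hleaves l)))"
    define y where "y = run (tg l) x"
    have qr: "?q \<notin> set (leaves r)" using qidx_in[of l] dl by auto
    have qH: "?q \<notin> idx ?HL" using idx_forest[of "hang l"] hang_distinct[OF dl(1)]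
      by (auto simp: hleaves_def)
    have y: "y = run ?HL ?x'" unfolding y_def by (rule Node.IH(1)[OF dl(1)])
    have yq: "y ?q = x ?q + sum_list (map x (hleaves l))"
      using y qH by (simp add: run_outside)
    have mr: "map y (leaves r) = map x (leaves r)"
      using idx_tg[of l] dl by (auto simp: y_def intro!: run_outside)
    have "run (tg (Node b l r)) x = gate_app (qidx r, ?q) (run (tg r) y)"
      using L by (simp add: y_def)
    also have "\<dots> = run (tg r) (y(?q := y ?q + sum_list (map y (leaves r))))"
      by (rule gate_past[OF dl(2) qr])
    also have "y(?q := y ?q + sum_list (map y (leaves r))) =
        run ?HL (?x'(?q := y ?q + sum_list (map y (leaves r))))"
      using y qH by (simp add: run_upd)
    also have "?x'(?q := y ?q + sum_list (map y (leaves r))) =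
       x(?q := x ?q + sum_list (map x (hleaves (Node b l r))))"
      using L yq arg_cong[where f=sum_list, OF mr] by (simp add: algebra_simps)
    finally show ?thesis using L by simp
  next
    case R
    let ?q = "qidx r"
    let ?HR = "concat (map tg (hang r))"
    let ?x' = "x(?q := x ?q + sum_list (map x (hleaves r)))"
    define y where "y = run (tg r) x"
    have ql: "?q \<notin> set (leaves l)" using qidx_in[of r] dl by auto
    have qH: "?q \<notin> idx ?HR" using idx_forest[of "hang r"] hang_distinct[OF dl(2)]
      by (auto simp: hleaves_def)
    have y: "y = run ?HR ?x'" unfolding y_def by (rule Node.IH(2)[OF dl(2)])
    have yq: "y ?q = x ?q + sum_list (map x (hleaves r))"
      using y qH by (simp add: run_outside)
    have ml: "map y (leaves l) = map x (leaves l)"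
      using idx_tg[of r] dl by (auto simp: y_def intro!: run_outside)
    have disj: "idx (tg r) \<inter> idx (tg l) = {}" using idx_tg[of r] idx_tg[of l] dl by auto
    have "run (tg (Node b l r)) x = gate_app (qidx l, ?q) (run (tg r) (run (tg l) x))"
      using R by simp
    also have "run (tg r) (run (tg l) x) = run (tg l) y"
      unfolding y_def by (rule run_comm[OF disj])
    also have "gate_app (qidx l, ?q) (run (tg l) y) =
        run (tg l) (y(?q := y ?q + sum_list (map y (leaves l))))"
      by (rule gate_past[OF dl(1) ql])
    also have "y(?q := y ?q + sum_list (map y (leaves l))) =
        run ?HR (?x'(?q := y ?q + sum_list (map y (leaves l))))"
      using y qH by (simp add: run_upd)
    also have "?x'(?q := y ?q + sum_list (map y (leaves l))) =
       x(?q := x ?q + sum_list (map x (hleaves (Node b l r))))"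
      using R yq arg_cong[where f=sum_list, OF ml] by (simp add: algebra_simps)
    finally show ?thesis using R by simp
  qed
qed

fun descU :: "nat \<Rightarrow> ctree \<Rightarrow> ctree" where
  "descU k (Leaf a) = Leaf a"
| "descU k (Node b l r) = (if k < length (leaves l) then descU k l
     else if k < length (leaves r) then descU k r else Node b l r)"

fun descC :: "nat \<Rightarrow> ctree \<Rightarrow> ctree" where
  "descC k (Leaf a) = Leaf a"
| "descC k (Node b l r) = (if k < length (leaves l) then Node b (descC k l) r
     else if k < length (leaves r) then Node b l (descC k r) else Leaf (qidx (Node b l r)))"

lemma descC_qidx: "qidx (descC k T) = qidx T"
proof (induction k T rule: descC.induct)
  case (2 k b l r) thus ?case by (cases b) auto
qed auto

lemma desc_leaves: "\<exists>pre post. leaves T = pre @ leaves (descU k T) @ post \<and>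
   leaves (descC k T) = pre @ [qidx (descU k T)] @ post"
proof (induction k T rule: descC.induct)
  case (1 k a) thus ?case by auto
next
  case (2 k b l r)
  show ?case
  proof (cases "k < length (leaves l)")
    case True
    then obtain pre post where "leaves l = pre @ leaves (descU k l) @ post"
      "leaves (descC k l) = pre @ [qidx (descU k l)] @ post" using 2 by auto
    thus ?thesis using True by (intro exI[of _ pre] exI[of _ "post @ leaves r"]) auto
  next
    case F: False
    show ?thesis
    proof (cases "k < length (leaves r)")
      case True
      then obtain pre post where "leaves r = pre @ leaves (descU k r) @ post"
        "leaves (descC k r) = pre @ [qidx (descU k r)] @ post" using 2 F by auto
      thus ?thesis using True F by (intro exI[of _ "leaves l @ pre"] exI[of _ post]) auto
    next
      case False
      thus ?thesis using F by (intro exI[of _ "[]"] exI[of _ "[]"]) auto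
    qed
  qed
qed

lemma descU_props: "k < length (leaves T) \<Longrightarrow> k < length (leaves (descU k T)) \<and>
   (\<forall>b l r. descU k T = Node b l r \<longrightarrow> length (leaves l) \<le> k \<and> length (leaves r) \<le> k)"
  by (induction k T rule: descU.induct) auto

lemma descU_sub: "set (leaves (descU k T)) \<subseteq> set (leaves T)"
  using desc_leaves[of T k] by auto

lemma desc_run: "distinct (leaves T) \<Longrightarrow>
   run (tg T) x = run (tg (descC k T)) (run (tg (descU k T)) x)"
proof (induction k T arbitrary: x rule: descC.induct)
  case (1 k a) thus ?case by simp
next
  case (2 k b l r)
  have dl: "distinct (leaves l)" "distinct (leaves r)" "set (leaves l) \<inter> set (leaves r) = {}"
    using "2.prems" by auto
  show ?case
  proof (cases "k < length (leaves l)")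
    case True
    have g: "ngate b (descC k l) r = ngate b l r" by (cases b) (auto simp: descC_qidx)
    show ?thesis using True "2.IH"(1)[OF True dl(1)] g by simp
  next
    case F: False
    show ?thesis
    proof (cases "k < length (leaves r)")
      case True
      have g: "ngate b l (descC k r) = ngate b l r" by (cases b) (auto simp: descC_qidx)
      have disj: "idx (tg (descU k r)) \<inter> idx (tg l) = {}"
        using idx_tg[of "descU k r"] descU_sub[of k r] idx_tg[of l] dl by auto
      show ?thesis using True F "2.IH"(2)[OF F True dl(2)] g run_comm[OF disj] by simp
    next
      case False
      thus ?thesis using F by simp
    qed
  qed
qed

section \<open>Fan-in gadget\<close>

fun pairs :: "nat list \<Rightarrow> (nat \<times> nat) list" where
  "pairs (a # b # xs) = (b, a) # pairs xs"
| "pairs _ = []"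

fun odds :: "nat list \<Rightarrow> nat list" where
  "odds (a # b # xs) = a # odds xs"
| "odds xs = xs"

lemma pairs_idx: "idx (pairs A) \<subseteq> set A"
  by (induction A rule: pairs.induct) auto

lemma odds_set: "set (odds A) \<subseteq> set A"
  by (induction A rule: odds.induct) auto

lemma odds_distinct: "distinct A \<Longrightarrow> distinct (odds A)"
  by (induction A rule: odds.induct) (use odds_set in auto)

lemma length_odds: "length (odds A) = (length A + 1) div 2"
  by (induction A rule: odds.induct) auto

lemma pairs_fst_snd: "set (map fst (pairs A)) \<subseteq> set A" "set (map snd (pairs A)) \<subseteq> set A"
  using pairs_idx[of A] by (auto simp: idx_def)

lemma pairs_valid: "distinct A \<Longrightarrow> distinct (map fst (pairs A) @ map snd (pairs A))"
proof (induction A rule: pairs.induct)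
  case (1 a b xs)
  thus ?case using pairs_fst_snd[of xs] by auto
qed auto

lemma pairs_sum: "distinct A \<Longrightarrow> sum_list (map (run (pairs A) x) (odds A)) = sum_list (map x A)"
proof (induction A rule: pairs.induct)
  case (1 a b xs)
  define z where "z = run (pairs xs) x"
  have ab: "a \<notin> idx (pairs xs)" "b \<notin> idx (pairs xs)" using 1 pairs_idx[of xs] by auto
  have za: "z a = x a" "z b = x b" using ab by (simp_all add: z_def run_outside)
  have ao: "a \<notin> set (odds xs)" using 1 odds_set[of xs] by auto
  have e: "run (pairs (a # b # xs)) x = z(a := x a + x b)" using za by (simp add: z_def)
  have m: "map (run (pairs (a # b # xs)) x) (odds (a # b # xs)) = (x a + x b) # map z (odds xs)"
    unfolding e using ao by simp
  have "sum_list (map (run (pairs (a # b # xs)) x) (odds (a # b # xs))) =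
      x a + x b + sum_list (map z (odds xs))" unfolding m by (simp only: sum_list.Cons)
  also have "sum_list (map z (odds xs)) = sum_list (map x xs)"
  proof -
    have "distinct xs" using "1.prems" by simp
    thus ?thesis unfolding z_def by (rule "1.IH")
  qed
  finally show ?case by (simp add: add.assoc)
qed auto

lemma pairs_inv: "distinct A \<Longrightarrow> run (pairs A) (run (pairs A) x) = x"
proof (induction A arbitrary: x rule: pairs.induct)
  case (1 a b xs)
  have ab: "{b, a} \<inter> idx (pairs xs) = {}" using 1 pairs_idx[of xs] by auto
  have ne: "a \<noteq> b" using 1 by auto
  have "run (pairs (a # b # xs)) (run (pairs (a # b # xs)) x) =
     gate_app (b, a) (run (pairs xs) (gate_app (b, a) (run (pairs xs) x)))" by simp
  also have "\<dots> = gate_app (b, a) (gate_app (b, a) (run (pairs xs) (run (pairs xs) x)))"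
    using gate_comm[OF ab] by simp
  also have "\<dots> = gate_app (b, a) (gate_app (b, a) x)" using 1 by simp
  also have "\<dots> = x" using ne by (simp add: add.assoc)
  finally show ?case .
qed auto

function gad :: "nat \<Rightarrow> nat list \<Rightarrow> (nat \<times> nat) list list" where
  "gad t [] = []"
| "gad t [a] = [[(a, t)]]"
| "gad t (a # b # xs) = [pairs (a # b # xs)] @ gad t (odds (a # b # xs)) @ [pairs (a # b # xs)]"
  by pat_completeness auto
termination
  by (relation "measure (\<lambda>(t, A). length A)") (auto simp: length_odds)

lemma gad_run: "distinct A \<Longrightarrow> t \<notin> set A \<Longrightarrow>
  run (concat (gad t A)) x = x(t := x t + sum_list (map x A))"
proof (induction t A arbitrary: x rule: gad.induct)
  case (1 t) thus ?case by simp
next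
  case (2 t a) thus ?case by (simp add: add.commute)
next
  case (3 t a b xs)
  let ?A = "a # b # xs"
  let ?P = "pairs ?A"
  define y where "y = run ?P x"
  have tP: "t \<notin> idx ?P" using 3 pairs_idx[of ?A] by blast
  have yt: "y t = x t" unfolding y_def by (rule run_outside[OF tP])
  have dO: "distinct (odds ?A)" "t \<notin> set (odds ?A)"
    using odds_distinct[OF "3.prems"(1)] odds_set[of ?A] "3.prems"(2) by blast+
  have "run (concat (gad t ?A)) x = run ?P (run (concat (gad t (odds ?A))) y)"
    by (simp add: y_def del: odds.simps pairs.simps)
  also have "run (concat (gad t (odds ?A))) y = y(t := y t + sum_list (map y (odds ?A)))"
    by (rule "3.IH"[OF dO])
  also have "y t + sum_list (map y (odds ?A)) = x t + sum_list (map x ?A)"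
  proof -
    have ps: "sum_list (map y (odds ?A)) = sum_list (map x ?A)"
      unfolding y_def by (rule pairs_sum[OF "3.prems"(1)])
    show ?thesis by (simp only: yt ps)
  qed
  also have "run ?P (y(t := x t + sum_list (map x ?A))) = (run ?P y)(t := x t + sum_list (map x ?A))"
    by (rule run_upd[OF tP])
  also have "run ?P y = x" unfolding y_def by (rule pairs_inv[OF "3.prems"(1)])
  finally show ?case .
qed

definition valid :: "nat set \<Rightarrow> (nat \<times> nat) list \<Rightarrow> bool" where
  "valid S Y \<longleftrightarrow> distinct (map fst Y @ map snd Y) \<and> idx Y \<subseteq> S"

lemma valid_mono: "valid S Y \<Longrightarrow> S \<subseteq> S' \<Longrightarrow> valid S' Y"
  by (auto simp: valid_def)

lemma gad_valid: "distinct A \<Longrightarrow> t \<notin> set A \<Longrightarrow> Y \<in> set (gad t A) \<Longrightarrow> valid (insert t (set A)) Y"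
proof (induction t A rule: gad.induct)
  case (1 t) thus ?case by simp
next
  case (2 t a) thus ?case by (auto simp: valid_def)
next
  case (3 t a b xs)
  let ?A = "a # b # xs"
  have dO: "distinct (odds ?A)" "t \<notin> set (odds ?A)"
    using odds_distinct[OF "3.prems"(1)] odds_set[of ?A] "3.prems"(2) by blast+
  have vP: "valid (insert t (set ?A)) (pairs ?A)"
    using pairs_valid[OF "3.prems"(1)] pairs_idx[of ?A] by (auto simp: valid_def)
  have sub: "insert t (set (odds ?A)) \<subseteq> insert t (set ?A)" using odds_set[of ?A] by blast
  from "3.prems"(3) consider "Y = pairs ?A" | "Y \<in> set (gad t (odds ?A))"
    by (auto simp del: odds.simps pairs.simps)
  thus ?case
  proof cases
    case 1 thus ?thesis using vP by simp
  next
    case 2 thus ?thesis using "3.IH"[OF dO 2] valid_mono sub by blast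
  qed
qed

lemma gad_len: "length A \<le> 2 ^ q \<Longrightarrow> length (gad t A) \<le> 2 * q + 1"
proof (induction t A arbitrary: q rule: gad.induct)
  case (3 t a b xs)
  let ?A = "a # b # xs"
  obtain q' where q: "q = Suc q'" using "3.prems" by (cases q) auto
  have "length (odds ?A) \<le> 2 ^ q'"
    using "3.prems" unfolding length_odds q by simp
  hence "length (gad t (odds ?A)) \<le> 2 * q' + 1" by (rule "3.IH")
  thus ?case unfolding q by (simp del: odds.simps pairs.simps)
qed auto

section \<open>Merging layers\<close>

fun merge :: "'a list list \<Rightarrow> 'a list list \<Rightarrow> 'a list list" where
  "merge (a # as) (b # bs) = (a @ b) # merge as bs"
| "merge [] bs = bs"
| "merge as [] = as"

lemma merge_len: "length (merge A B) = max (length A) (length B)"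
  by (induction A B rule: merge.induct) auto

lemma valid_append:
  assumes va: "valid S1 a" and vb: "valid S2 b" and d: "S1 \<inter> S2 = {}"
  shows "valid (S1 \<union> S2) (a @ b)"
proof -
  have sa: "set (map fst a @ map snd a) = idx a" "set (map fst b @ map snd b) = idx b"
    by (auto simp: idx_def)
  have m: "mset (map fst (a @ b) @ map snd (a @ b)) = mset ((map fst a @ map snd a) @ (map fst b @ map snd b))"
    by (simp add: ac_simps)
  have "distinct ((map fst a @ map snd a) @ (map fst b @ map snd b))"
    unfolding distinct_append[of "map fst a @ map snd a"] sa
    using va vb d unfolding valid_def by blast
  hence "distinct (map fst (a @ b) @ map snd (a @ b))" using mset_eq_imp_distinct_iff[OF m] by simp
  moreover have "idx (a @ b) \<subseteq> S1 \<union> S2" using va vb unfolding valid_def by auto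
  ultimately show ?thesis by (simp add: valid_def)
qed

lemma merge_valid: "(\<forall>Y\<in>set A. valid S1 Y) \<Longrightarrow> (\<forall>Y\<in>set B. valid S2 Y) \<Longrightarrow> S1 \<inter> S2 = {} \<Longrightarrow>
   Y \<in> set (merge A B) \<Longrightarrow> valid (S1 \<union> S2) Y"
proof (induction A B rule: merge.induct)
  case (1 a as b bs)
  thus ?case using valid_append[of S1 a S2 b] by auto
next
  case (2 bs) thus ?case using valid_mono[of S2 Y "S1 \<union> S2"] by auto
next
  case (3 v va) thus ?case using valid_mono[of S1 Y "S1 \<union> S2"] by auto
qed

lemma merge_run: "(\<forall>Y\<in>set A. idx Y \<subseteq> S1) \<Longrightarrow> (\<forall>Y\<in>set B. idx Y \<subseteq> S2) \<Longrightarrow> S1 \<inter> S2 = {} \<Longrightarrow>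
   run (concat (merge A B)) x = run (concat A) (run (concat B) x)"
proof (induction A B arbitrary: x rule: merge.induct)
  case (1 a as b bs)
  have "idx (concat as) \<subseteq> S1" using "1.prems" by (auto simp: idx_concat)
  hence disj: "idx b \<inter> idx (concat as) = {}" using "1.prems" by auto
  have "run (concat (merge (a # as) (b # bs))) x = run a (run b (run (concat as) (run (concat bs) x)))"
    using 1 by simp
  also have "run b (run (concat as) (run (concat bs) x)) = run (concat as) (run b (run (concat bs) x))"
    by (rule run_comm[OF disj])
  finally show ?case by simp
qed auto

definition single :: "nat \<Rightarrow> bool" where
  "single p \<longleftrightarrow> (\<forall>T. distinct (leaves T) \<and> length (leaves T) \<le> 2 ^ p \<longrightarrow>
     (\<exists>Ls. (\<forall>x. run (concat Ls) x = run (tg T) x) \<and> (\<forall>Y\<in>set Ls. valid (set (leaves T)) Y)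
        \<and> length Ls \<le> 3 * p^2))"

lemma single_forest:
  assumes "single p"
  shows "distinct (concat (map leaves Ts)) \<Longrightarrow> (\<forall>T\<in>set Ts. length (leaves T) \<le> 2 ^ p) \<Longrightarrow>
   \<exists>Ls. (\<forall>x. run (concat Ls) x = run (concat (map tg Ts)) x) \<and>
     (\<forall>Y\<in>set Ls. valid (set (concat (map leaves Ts))) Y) \<and> length Ls \<le> 3 * p^2"
proof (induction Ts)
  case Nil show ?case by (intro exI[of _ "[]"]) auto
next
  case (Cons T Ts)
  have dT: "distinct (leaves T)" and dTs: "distinct (concat (map leaves Ts))"
    and disj: "set (leaves T) \<inter> set (concat (map leaves Ts)) = {}" using Cons.prems by auto
  obtain L1 where L1: "\<forall>x. run (concat L1) x = run (tg T) x" "\<forall>Y\<in>set L1. valid (set (leaves T)) Y"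
    "length L1 \<le> 3 * p^2" using assms Cons.prems dT unfolding single_def by auto
  obtain L2 where L2: "\<forall>x. run (concat L2) x = run (concat (map tg Ts)) x"
    "\<forall>Y\<in>set L2. valid (set (concat (map leaves Ts))) Y" "length L2 \<le> 3 * p^2"
    using Cons dTs by auto
  have i1: "\<forall>Y\<in>set L1. idx Y \<subseteq> set (leaves T)" using L1 by (auto simp: valid_def)
  have i2: "\<forall>Y\<in>set L2. idx Y \<subseteq> set (concat (map leaves Ts))" using L2 by (auto simp: valid_def)
  show ?case
  proof (intro exI[of _ "merge L1 L2"] conjI allI ballI)
    fix x show "run (concat (merge L1 L2)) x = run (concat (map tg (T # Ts))) x"
      using merge_run[OF i1 i2 disj] L1(1) L2(1) by simp
  next
    fix Y assume "Y \<in> set (merge L1 L2)"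
    from merge_valid[OF L1(2) L2(2) disj this]
    show "valid (set (concat (map leaves (T # Ts)))) Y" by simp
  next
    show "length (merge L1 L2) \<le> 3 * p^2" using L1 L2 by (simp add: merge_len)
  qed
qed

lemma single_all: "single p"
proof (induction p)
  case 0
  show ?case unfolding single_def
  proof (intro allI impI)
    fix T :: ctree assume "distinct (leaves T) \<and> length (leaves T) \<le> 2 ^ 0"
    hence T1: "length (leaves T) \<le> 1" by simp
    obtain a where "T = Leaf a"
    proof (cases T)
      case (Leaf a) thus ?thesis using that by simp
    next
      case (Node b l r)
      hence False using T1 nl_pos[of l] nl_pos[of r] by simp
      thus ?thesis ..
    qed
    thus "\<exists>Ls. (\<forall>x. run (concat Ls) x = run (tg T) x) \<and> (\<forall>Y\<in>set Ls. valid (set (leaves T)) Y)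
        \<and> length Ls \<le> 3 * 0^2" by (intro exI[of _ "[]"]) auto
  qed
next
  case (Suc p)
  show ?case unfolding single_def
  proof (intro allI impI)
    fix T :: ctree assume asm: "distinct (leaves T) \<and> length (leaves T) \<le> 2 ^ Suc p"
    hence dT: "distinct (leaves T)" and sT: "length (leaves T) \<le> 2 ^ Suc p" by auto
    show "\<exists>Ls. (\<forall>x. run (concat Ls) x = run (tg T) x) \<and> (\<forall>Y\<in>set Ls. valid (set (leaves T)) Y)
        \<and> length Ls \<le> 3 * (Suc p)^2"
    proof (cases "length (leaves T) \<le> 2 ^ p")
      case True
      hence "distinct (leaves T) \<and> length (leaves T) \<le> 2 ^ p" using dT by simp
      from Suc[unfolded single_def, rule_format, OF this]
      obtain Ls where Ls: "(\<forall>x. run (concat Ls) x = run (tg T) x)" "(\<forall>Y\<in>set Ls. valid (set (leaves T)) Y)"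
        "length Ls \<le> 3 * p^2" by blast
      have "3 * p^2 \<le> 3 * (Suc p)^2" by (simp add: power2_eq_square)
      hence "length Ls \<le> 3 * (Suc p)^2" using Ls(3) by linarith
      thus ?thesis using Ls by (intro exI[of _ Ls]) auto
    next
      case False
      define k where "k = (2::nat) ^ p"
      define u where "u = descU k T"
      define C where "C = descC k T"
      define q where "q = qidx u"
      define A where "A = hleaves u"
      define Fs where "Fs = C # hang u"
      have kT: "k < length (leaves T)" using False k_def by simp
      obtain pre post where pp: "leaves T = pre @ leaves u @ post" "leaves C = pre @ [q] @ post"
        using desc_leaves[of T k] unfolding u_def C_def q_def by blast
      have ku: "k < length (leaves u)" using descU_props[OF kT] u_def by simp
      have du: "distinct (leaves u)" using dT pp(1) by simp
      have dqA: "distinct (q # A)" using hang_distinct[OF du] q_def A_def by simp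
      have msetF: "mset (concat (map leaves Fs)) = mset (leaves T)"
        using pp hang_mset[of u] by (simp add: Fs_def A_def q_def hleaves_def)
      have dF: "distinct (concat (map leaves Fs))"
        using mset_eq_imp_distinct_iff[OF msetF] dT by simp
      have setF: "set (concat (map leaves Fs)) = set (leaves T)"
        using arg_cong[where f=set_mset, OF msetF] by simp
      have sizeF: "\<forall>H\<in>set Fs. length (leaves H) \<le> 2 ^ p"
      proof
        fix H assume "H \<in> set Fs"
        hence "H = C \<or> H \<in> set (hang u)" by (simp add: Fs_def)
        thus "length (leaves H) \<le> 2 ^ p"
        proof
          assume "H = C"
          have "length (leaves C) + length (leaves u) = length (leaves T) + 1" using pp by simp
          thus ?thesis using \<open>H = C\<close> ku sT k_def by simp
        next
          assume H: "H \<in> set (hang u)"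
          show ?thesis
          proof (cases u)
            case (Leaf a) thus ?thesis using H by simp
          next
            case (Node b l r)
            hence "length (leaves l) \<le> k \<and> length (leaves r) \<le> k"
              using descU_props[OF kT] u_def by auto
            thus ?thesis using hang_node[of H b l r] H Node k_def by auto
          qed
        qed
      qed
      obtain Ls1 where Ls1: "\<forall>x. run (concat Ls1) x = run (concat (map tg Fs)) x"
        "\<forall>Y\<in>set Ls1. valid (set (concat (map leaves Fs))) Y" "length Ls1 \<le> 3 * p^2"
        using single_forest[OF Suc dF sizeF] by blast
      define G where "G = gad q A"
      have lenA: "length A \<le> 2 ^ Suc p"
      proof -
        have "length (leaves u) = Suc (length A)"
          using arg_cong[where f=size, OF hang_mset[of u]] by (simp add: A_def)
        thus ?thesis using sT pp(1) by simp
      qed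
      have lenG: "length G \<le> 2 * Suc p + 1" unfolding G_def by (rule gad_len[OF lenA])
      have vG: "\<forall>Y\<in>set G. valid (set (leaves T)) Y"
      proof
        fix Y assume "Y \<in> set G"
        hence "valid (insert q (set A)) Y" using gad_valid[of A q Y] dqA G_def by simp
        moreover have "insert q (set A) \<subseteq> set (leaves T)"
          using hang_set[of u] pp(1) by (auto simp: q_def A_def)
        ultimately show "valid (set (leaves T)) Y" by (rule valid_mono)
      qed
      show ?thesis
      proof (intro exI[of _ "Ls1 @ G"] conjI allI ballI)
        fix x
        have "run (concat (Ls1 @ G)) x = run (concat Ls1) (run (concat G) x)" by simp
        also have "run (concat G) x = x(q := x q + sum_list (map x A))"
          unfolding G_def using dqA by (intro gad_run) auto
        also have "run (concat Ls1) (x(q := x q + sum_list (map x A))) =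
            run (tg C) (run (concat (map tg (hang u))) (x(q := x q + sum_list (map x A))))"
          using Ls1(1) by (simp add: Fs_def)
        also have "run (concat (map tg (hang u))) (x(q := x q + sum_list (map x A))) = run (tg u) x"
          using chain_split[OF du, of x] by (simp add: q_def A_def)
        also have "run (tg C) (run (tg u) x) = run (tg T) x"
          using desc_run[OF dT, of x k] by (simp add: C_def u_def)
        finally show "run (concat (Ls1 @ G)) x = run (tg T) x" .
      next
        fix Y assume "Y \<in> set (Ls1 @ G)"
        thus "valid (set (leaves T)) Y" using Ls1(2) vG setF by auto
      next
        have "length (Ls1 @ G) \<le> 3 * p^2 + (2 * Suc p + 1)" using Ls1(3) lenG by simp
        also have "\<dots> \<le> 3 * (Suc p)^2" by (simp add: power2_eq_square)
        finally show "length (Ls1 @ G) \<le> 3 * (Suc p)^2" .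
      qed
    qed
  qed
qed

lemma ln2_ge: "1/2 \<le> ln (2::real)"
proof -
  have "exp (1/2::real) * exp (1/2) = exp (1/2 + 1/2)" by (rule exp_add[symmetric])
  also have "(1/2 + 1/2::real) = 1" by simp
  also have "exp (1::real) \<le> 3" by (rule exp_le)
  finally have e: "exp (1/2::real) * exp (1/2) \<le> 3" .
  have "exp (1/2::real) \<le> 2"
  proof (rule ccontr)
    assume "\<not> exp (1/2::real) \<le> 2"
    hence "2 < exp (1/2::real)" by linarith
    hence "2 * 2 < exp (1/2::real) * exp (1/2)" by (intro mult_strict_mono) auto
    thus False using e by linarith
  qed
  moreover have "0 < (2::real)" by simp
  ultimately show ?thesis using ln_ge_iff[of "2::real" "1/2"] by blast
qed

lemma real_bound:
  assumes n: "2 \<le> n" and p: "2 ^ (p - 1) < n" "1 \<le> p"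
  shows "real (3 * p^2) \<le> 48 * (ln (real n))^2"
proof -
  have n2: "(2::real) \<le> real n" using n by linarith
  have lnn: "ln 2 \<le> ln (real n)" using n2 by (subst ln_le_cancel_iff) auto
  have h: "(2::real)^(p-1) < real n" using p(1) by (metis of_nat_less_iff of_nat_numeral of_nat_power)
  have "ln ((2::real)^(p-1)) < ln (real n)" using h by (subst ln_less_cancel_iff) auto
  moreover have "ln ((2::real)^(p-1)) = real (p-1) * ln 2" by (rule ln_realpow)
  moreover have "real (p-1) = real p - 1" using p(2) by (simp add: of_nat_diff)
  ultimately have "(real p - 1) * ln 2 < ln (real n)" by simp
  hence "real p * ln 2 < ln (real n) + ln 2" by (simp add: algebra_simps)
  hence a: "real p * ln 2 < 2 * ln (real n)" using lnn by linarith
  have "real p * (1/2) \<le> real p * ln 2" using ln2_ge by (intro mult_left_mono) auto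
  hence pl: "real p \<le> 4 * ln (real n)" using a by linarith
  have "real p ^ 2 \<le> (4 * ln (real n))^2" using pl by (intro power_mono) auto
  hence "real p ^ 2 \<le> 16 * (ln (real n))^2" by (simp add: power_mult_distrib)
  hence "3 * real p ^ 2 \<le> 48 * (ln (real n))^2" by linarith
  thus ?thesis by simp
qed

theorem theorem3p5:
  "\<exists>C :: real. C > 0 \<and>
     (\<forall>n :: nat. \<forall>T. n \<ge> 2 \<longrightarrow> cnot_tree n T \<longrightarrow>
        (\<exists>Ms :: bit mat list.
           real (length Ms) \<le> C * (ln (real n))\<^sup>2 \<and>
           (\<forall>M \<in> set Ms. par_elim n M) \<and>
           tree_mat n T = foldr (*) Ms (1\<^sub>m n)))"
proof (intro exI[of _ 48] conjI allI impI)
  fix n :: nat and T assume n: "2 \<le> n" and ct: "cnot_tree n T"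
  have dT: "distinct (leaves T)" and lT: "length (leaves T) = n" and sT: "set (leaves T) \<subseteq> {1..n}"
    using ct by (auto simp: cnot_tree_def)
  define p where "p = (LEAST p. n \<le> 2 ^ p)"
  have "n < 2 ^ n" by (rule less_exp)
  hence ex: "\<exists>p. n \<le> 2 ^ p" by (intro exI[of _ n]) simp
  have p1: "n \<le> 2 ^ p" unfolding p_def by (rule LeastI_ex[OF ex])
  have p0: "1 \<le> p"
  proof (rule ccontr)
    assume "\<not> 1 \<le> p" hence "p = 0" by simp
    thus False using p1 n by simp
  qed
  have p2: "2 ^ (p - 1) < n"
  proof (rule ccontr)
    assume "\<not> 2 ^ (p - 1) < n"
    hence "n \<le> 2 ^ (p - 1)" by simp
    hence "p \<le> p - 1" unfolding p_def by (rule Least_le)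
    thus False using p0 p_def by simp
  qed
  obtain Ls where Ls: "\<forall>x. run (concat Ls) x = run (tg T) x" "\<forall>Y\<in>set Ls. valid (set (leaves T)) Y"
    "length Ls \<le> 3 * p^2" using single_all[of p] dT lT p1 unfolding single_def by auto
  have vn: "\<forall>Y\<in>set Ls. valid {1..n} Y" using Ls(2) sT valid_mono by blast
  show "\<exists>Ms :: bit mat list. real (length Ms) \<le> 48 * (ln (real n))\<^sup>2 \<and>
           (\<forall>M \<in> set Ms. par_elim n M) \<and> tree_mat n T = foldr (*) Ms (1\<^sub>m n)"
  proof (intro exI[of _ "map (gm n) Ls"] conjI ballI)
    have "real (length Ls) \<le> real (3 * p^2)" using Ls(3) by linarith
    also have "\<dots> \<le> 48 * (ln (real n))\<^sup>2" by (rule real_bound[OF n p2 p0])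
    finally show "real (length (map (gm n) Ls)) \<le> 48 * (ln (real n))\<^sup>2" by simp
  next
    fix M assume "M \<in> set (map (gm n) Ls)"
    then obtain Y where Y: "Y \<in> set Ls" "M = gm n Y" by auto
    thus "par_elim n M" using vn par_elim_gm by (auto simp: valid_def)
  next
    have "tree_mat n T = gm n (tg T)" by (rule tree_mat_gm)
    also have "\<dots> = gm n (concat Ls)"
    proof (rule gm_eq)
      show "idx (tg T) \<subseteq> {1..n}" using idx_tg[of T] sT by auto
      show "idx (concat Ls) \<subseteq> {1..n}" using vn by (auto simp: idx_concat valid_def)
      show "\<And>x. run (tg T) x = run (concat Ls) x" using Ls(1) by simp
    qed
    also have "\<dots> = foldr (*) (map (gm n) Ls) (1\<^sub>m n)" by (rule gm_concat)
    finally show "tree_mat n T = foldr (*) (map (gm n) Ls) (1\<^sub>m n)" .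
  qed
qed simp

end
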